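(* Let $A\in\mathrm{SL}(2,\mathbb R)$ and $\alpha\in\mathbb R$. Then either $\alpha$ is the slope of a vector of $A\Lambda_q$ (i.e. $\alpha=a/q$ for some $(q,a)^T\in A\Lambda_q$ with $q\ne0$), or there exist infinitely many $(q,a)^T\in A\Lambda_q$ with $q>0$ such that $$\left|\alpha-\frac aq\right|\le\frac1{2q^2}.$$
   Context: Fix an integer $q\ge3$ (used only as the index of the group; coordinates of vectors are written $(q,a)^T$ by abuse of notation), let $\lambda_q=2\cos(\pi/q)$, and let $G_q\subset \mathrm{SL}(2,\mathbb R)$ be the Hecke triangle group generated by $S=\begin{pmatrix}0&-1\\1&0\end{pmatrix}$ and $T_q=\begin{pmatrix}1&\lambda_q\\0&1\end{pmatrix}$, acting linearly on $\mathbb R^2$; $\Lambda_q=G_q(1,0)^T$, $A\Lambda_q=\{A\mathbf v:\mathbf v\in\Lambda_q\}$. *)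

theory Defs
  imports "HOL-Analysis.Analysis"
begin

(* 2x2 real matrices as real^2^2; vectors (x,y)^T as real^2 with x = v$1, y = v$2. *)

definition mat2 :: "real \<Rightarrow> real \<Rightarrow> real \<Rightarrow> real \<Rightarrow> real^2^2" where
  "mat2 a b c d = vector [vector [a, b], vector [c, d]]"

definition vec2 :: "real \<Rightarrow> real \<Rightarrow> real^2" where
  "vec2 x y = vector [x, y]"

definition SL2 :: "(real^2^2) set" where
  "SL2 = {A. det A = 1}"

definition lambda_hecke :: "nat \<Rightarrow> real" where
  "lambda_hecke m = 2 * cos (pi / real m)"

definition S_mat :: "real^2^2" where
  "S_mat = mat2 0 (-1) 1 0"

definition T_mat :: "nat \<Rightarrow> real^2^2" where
  "T_mat m = mat2 1 (lambda_hecke m) 0 1"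

inductive_set hecke_group :: "nat \<Rightarrow> (real^2^2) set" for m :: nat where
  id: "mat 1 \<in> hecke_group m"
| mulS: "g \<in> hecke_group m \<Longrightarrow> g ** S_mat \<in> hecke_group m"
| mulSinv: "g \<in> hecke_group m \<Longrightarrow> g ** matrix_inv S_mat \<in> hecke_group m"
| mulT: "g \<in> hecke_group m \<Longrightarrow> g ** T_mat m \<in> hecke_group m"
| mulTinv: "g \<in> hecke_group m \<Longrightarrow> g ** matrix_inv (T_mat m) \<in> hecke_group m"

definition Lambda_hecke :: "nat \<Rightarrow> (real^2) set" where
  "Lambda_hecke m = {g *v vec2 1 0 | g. g \<in> hecke_group m}"

definition transl_set :: "real^2^2 \<Rightarrow> (real^2) set \<Rightarrow> (real^2) set" where
  "transl_set A L = {A *v v | v. v \<in> L}"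

end

theory Submission
  imports Defs
begin


lemma vec2_nth[simp]: "vec2 x y $ 1 = x" "vec2 x y $ 2 = y"
  by (simp_all add: vec2_def)

lemma mat2_nth[simp]: "mat2 a b c d $ 1 $ 1 = a" "mat2 a b c d $ 1 $ 2 = b"
   "mat2 a b c d $ 2 $ 1 = c" "mat2 a b c d $ 2 $ 2 = d"
  by (simp_all add: mat2_def)

lemma mat2_mulv: "mat2 a b c d *v x = vec2 (a*x$1 + b*x$2) (c*x$1+d*x$2)"
  by (simp add: vec_eq_iff forall_2 matrix_vector_mult_def sum_2)

lemma mat2_mul: "mat2 a b c d ** mat2 a' b' c' d' = mat2 (a*a'+b*c') (a*b'+b*d') (c*a'+d*c') (c*b'+d*d')"
  by (simp add: vec_eq_iff forall_2 matrix_matrix_mult_def sum_2)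

lemma mat1_eq: "(mat 1 :: real^2^2) = mat2 1 0 0 1"
  by (simp add: vec_eq_iff forall_2 mat_def)

lemma matrix_inv_eq:
  fixes A B :: "real^2^2"
  assumes "A ** B = mat 1" "B ** A = mat 1"
  shows "matrix_inv A = B"
proof -
  let ?P = "\<lambda>A'. A ** A' = mat 1 \<and> A' ** A = mat 1"
  have "?P (matrix_inv A)" unfolding matrix_inv_def by (rule someI[of ?P B]) (use assms in auto)
  then have "matrix_inv A = matrix_inv A ** (A ** B)" by (simp add: assms)
  also have "\<dots> = (matrix_inv A ** A) ** B" by (simp add: matrix_mul_assoc)
  also have "\<dots> = B" using \<open>?P (matrix_inv A)\<close> by simp
  finally show ?thesis .
qed

lemma Tinv: "matrix_inv (T_mat m) = mat2 1 (- lambda_hecke m) 0 1"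
  by (rule matrix_inv_eq) (simp_all add: T_mat_def mat2_mul mat1_eq)

lemma S_e1: "S_mat *v vec2 1 0 = vec2 0 1" and S_e2: "S_mat *v vec2 0 1 = vec2 (-1) 0"
  by (simp_all add: S_mat_def mat2_mulv)

lemma T_e1: "T_mat m *v vec2 1 0 = vec2 1 0" and T_e2: "T_mat m *v vec2 0 1 = vec2 (lambda_hecke m) 1"
  by (simp_all add: T_mat_def mat2_mulv)

lemma Ti_e1: "matrix_inv (T_mat m) *v vec2 1 0 = vec2 1 0" and Ti_e2: "matrix_inv (T_mat m) *v vec2 0 1 = vec2 (- lambda_hecke m) 1"
  by (simp_all add: Tinv mat2_mulv)

lemma vec2_lin: "vec2 x y = x *\<^sub>R vec2 1 0 + y *\<^sub>R vec2 0 1"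
  by (simp add: vec_eq_iff forall_2)

lemma gv_vec2: "(g::real^2^2) *v vec2 x y = x *\<^sub>R (g *v vec2 1 0) + y *\<^sub>R (g *v vec2 0 1)"
  by (subst vec2_lin) (simp add: matrix_vector_right_distrib matrix_vector_mult_scaleR)



locale core =
  fixes q :: nat and x0 z0 x1 z1 :: real
  assumes q3: "q \<ge> 3" and det0: "x0*z1 - z0*x1 = 1"
begin

definition lam :: real where "lam = 2 * cos (pi / real q)"
definition th :: real where "th = pi / real q"

inductive_set E :: "((real\<times>real)\<times>(real\<times>real)) set" where
  base: "((x0,z0),(x1,z1)) \<in> E"
| rotS: "((a,c),(b,d)) \<in> E \<Longrightarrow> ((b,d),(-a,-c)) \<in> E"
| addT: "((a,c),(b,d)) \<in> E \<Longrightarrow> ((a,c),(b+lam*a,d+lam*c)) \<in> E"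
| subT: "((a,c),(b,d)) \<in> E \<Longrightarrow> ((a,c),(b-lam*a,d-lam*c)) \<in> E"

lemma E_det0: "((a,c),(b,d)) \<in> E \<Longrightarrow> a * d - c * b = 1"
  by (induction rule: E.induct) (use det0 in \<open>auto simp: algebra_simps\<close>)
lemma E_det: "(p,r) \<in> E \<Longrightarrow> fst p * snd r - snd p * fst r = 1"
  using E_det0[of "fst p" "snd p" "fst r" "snd r"] by simp

lemma E_eq: "((a,c),(b,d)) \<in> E \<Longrightarrow> a = a' \<Longrightarrow> b = b' \<Longrightarrow> c = c' \<Longrightarrow> d = d' \<Longrightarrow> ((a',c'),(b',d')) \<in> E"
  by simp

lemma shift_nat: "((a,c),(b,d)) \<in> E \<Longrightarrow>
   ((a,c),(b + real k*lam*a, d + real k*lam*c)) \<in> E \<and> ((a,c),(b - real k*lam*a, d - real k*lam*c)) \<in> E"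
proof (induction k)
  case 0 then show ?case by simp
next
  case (Suc k)
  then have 1: "((a,c),(b + real k*lam*a, d + real k*lam*c)) \<in> E" and 2: "((a,c),(b - real k*lam*a, d - real k*lam*c)) \<in> E" by auto
  show ?case
  proof
    show "((a,c),(b + real (Suc k)*lam*a, d + real (Suc k)*lam*c)) \<in> E"
      by (rule E_eq[OF addT[OF 1]]) (simp_all add: algebra_simps)
    show "((a,c),(b - real (Suc k)*lam*a, d - real (Suc k)*lam*c)) \<in> E"
      by (rule E_eq[OF subT[OF 2]]) (simp_all add: algebra_simps)
  qed
qed

lemma shift: assumes "((a,c),(b,d)) \<in> E"
  shows "((a,c),(b + of_int n*lam*a, d + of_int n*lam*c)) \<in> E"
proof (cases "n \<ge> 0")
  case True
  then obtain k where "n = int k" by (intro that[of "nat n"]) simp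
  then show ?thesis using shift_nat[OF assms, of k] by simp
next
  case False
  then obtain k where "n = - int k" by (intro that[of "nat (-n)"]) simp
  then show ?thesis using shift_nat[OF assms, of k] by simp
qed

lemma stepE: assumes "((a,c),(b,d)) \<in> E"
  shows "((b + of_int n*lam*a, d + of_int n*lam*c),(-a,-c)) \<in> E"
  using rotS[OF shift[OF assms]] by simp

lemma negE: assumes "((a,c),(b,d)) \<in> E" shows "((-a,-c),(-b,-d)) \<in> E"
  using rotS[OF rotS[OF assms]] by simp

definition isV :: "real\<times>real \<Rightarrow> bool" where "isV y \<longleftrightarrow> (\<exists>r. (y,r) \<in> E)"

lemma isV1: "(p,r) \<in> E \<Longrightarrow> isV p" unfolding isV_def by blast
lemma isV2: "(p,r) \<in> E \<Longrightarrow> isV r"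
  unfolding isV_def using rotS[of "fst p" "snd p" "fst r" "snd r"] by auto
lemma isV_neg: "isV (a,c) \<Longrightarrow> isV (-a,-c)"
  unfolding isV_def using negE by fastforce

lemma th_pos: "0 < th" and th_le: "th \<le> pi/3"
proof -
  show "0 < th" using q3 by (simp add: th_def)
  have "real q \<ge> 3" using q3 by simp
  then show "th \<le> pi/3" unfolding th_def by (rule divide_left_mono) (use pi_gt_zero q3 in auto)
qed

lemma lam_th: "lam = 2 * cos th" by (simp add: lam_def th_def)

lemma lam_ge1: "1 \<le> lam" and lam_lt2: "lam < 2"
proof -
  have "cos (pi/3) \<le> cos th" by (rule cos_monotone_0_pi_le) (use th_pos th_le in auto)
  then show "1 \<le> lam" by (simp add: lam_th cos_60)
  have "cos th < cos 0" by (rule cos_monotone_0_pi) (use th_pos th_le in auto)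
  then show "lam < 2" by (simp add: lam_th)
qed

definition s :: real where "s = sin th"
lemma s_pos: "0 < s" unfolding s_def by (rule sin_gt_zero) (use th_pos th_le in auto)
lemma s_le1: "s \<le> 1" unfolding s_def by simp

definition Aq :: "nat \<Rightarrow> real" where "Aq k = sin (real (Suc k) * th) / s"
definition Bq :: "nat \<Rightarrow> real" where "Bq k = sin (real k * th) / s"

lemma sin_rec: "sin (real (k+2) * th) = lam * sin (real (Suc k) * th) - sin (real k * th)"
proof -
  have e1: "real (k+2) * th = real (Suc k) * th + th" by (simp add: algebra_simps)
  have e2: "real k * th = real (Suc k) * th - th" by (simp add: algebra_simps)
  show ?thesis unfolding e1 e2 sin_add sin_diff lam_th by (simp add: algebra_simps)
qed

lemma Aq_rec: "Aq (k+2) = lam * Aq (Suc k) - Aq k"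
  unfolding Aq_def using sin_rec[of "Suc k"] s_pos by (simp add: field_simps)
lemma Bq_rec: "Bq (k+2) = lam * Bq (Suc k) - Bq k"
  unfolding Bq_def using sin_rec[of k] s_pos by (simp add: field_simps)

lemma Aq_rec2: "Aq (Suc (Suc k)) = lam * Aq (Suc k) - Aq k" using Aq_rec[of k] by simp
lemma Bq_rec2: "Bq (Suc (Suc k)) = lam * Bq (Suc k) - Bq k" using Bq_rec[of k] by simp

lemma Aq0: "Aq 0 = 1" and Bq0: "Bq 0 = 0" and Bq1: "Bq 1 = 1"
  using s_pos by (simp_all add: Aq_def Bq_def s_def)

lemma Aq1: "Aq 1 = lam"
proof -
  have "sin (2*th) = 2 * sin th * cos th" by (rule sin_double)
  then show ?thesis using s_pos by (simp add: Aq_def s_def lam_th)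
qed

lemma qth: "real q * th = pi" using q3 by (simp add: th_def)

lemma Aq_last: "Aq (q-1) = 0"
proof -
  have "real (Suc (q-1)) = real q" using q3 by simp
  then show ?thesis by (simp add: Aq_def qth)
qed

lemma Bq_last: "Bq (q-1) = 1"
proof -
  have "real (q-1) * th = pi - th" using q3 qth by (simp add: of_nat_diff algebra_simps)
  then show ?thesis using s_pos by (simp add: Bq_def s_def)
qed

lemma Bq_pos: "1 \<le> k \<Longrightarrow> k \<le> q-1 \<Longrightarrow> 0 < Bq k"
proof -
  assume k: "1 \<le> k" "k \<le> q-1"
  have "0 < real k * th" using k th_pos by simp
  moreover have "real k * th < pi"
  proof -
    have "real k < real q" using k q3 by simp
    then have "real k * th < real q * th" using th_pos by simp
    then show ?thesis using qth by simp
  qed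
  ultimately have "0 < sin (real k * th)" by (rule sin_gt_zero)
  then show ?thesis using s_pos by (simp add: Bq_def)
qed

lemma Aq_bd: "\<bar>Aq k\<bar> \<le> 1/s" and Bq_bd: "\<bar>Bq k\<bar> \<le> 1/s"
  using s_pos by (simp_all add: Aq_def Bq_def abs_divide divide_right_mono)

definition Vc :: "real \<Rightarrow> real \<Rightarrow> real \<Rightarrow> real \<Rightarrow> nat \<Rightarrow> real\<times>real" where
  "Vc a c b d k = (Aq k * a + Bq k * b, Aq k * c + Bq k * d)"

lemma chain: assumes "((a,c),(b,d)) \<in> E" shows "(Vc a c b d k, Vc a c b d (Suc k)) \<in> E"
proof (induction k rule: nat_less_induct)
  case (1 k)
  show ?case
  proof (cases k)
    case 0
    show ?thesis unfolding 0 Vc_def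
      by (rule E_eq[OF addT[OF assms]]) (simp_all add: Aq0 Bq0 Aq1[unfolded One_nat_def] Bq1[unfolded One_nat_def] algebra_simps)
  next
    case (Suc j)
    then have "(Vc a c b d j, Vc a c b d (Suc j)) \<in> E" using 1 by simp
    then have "((fst (Vc a c b d j), snd (Vc a c b d j)), (fst (Vc a c b d (Suc j)), snd (Vc a c b d (Suc j)))) \<in> E" by simp
    note X = addT[OF rotS[OF this]]
    have eq: "Vc a c b d (Suc (Suc j)) = (- fst (Vc a c b d j) + lam * fst (Vc a c b d (Suc j)), - snd (Vc a c b d j) + lam * snd (Vc a c b d (Suc j)))"
      by (simp add: Vc_def Aq_rec2 Bq_rec2 algebra_simps)
    show ?thesis unfolding Suc eq using X by simp
  qed
qed

end

lemma crossing:
  fixes a b c d :: real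
  assumes det: "a*d - c*b = 1" and pr: "(a*c)*(b*d) \<le> 0"
  shows "\<bar>a*c\<bar> \<le> 1/2 \<or> \<bar>b*d\<bar> \<le> 1/2"
proof (rule ccontr)
  assume "\<not> ?thesis"
  hence h: "\<bar>a*c\<bar> > 1/2" "\<bar>b*d\<bar> > 1/2" by auto
  define X where "X = a*d"
  define Y where "Y = c*b"
  have XY: "X*Y = (a*c)*(b*d)" unfolding X_def Y_def by (simp add: algebra_simps)
  have s1: "X + (-Y) = 1" using det unfolding X_def Y_def by simp
  have "0 \<le> (X - (-Y))^2" by simp
  hence "4*(X*(-Y)) \<le> (X + (-Y))^2" by (simp add: power2_eq_square algebra_simps)
  hence le: "-(X*Y) \<le> 1/4" using s1 by simp
  have "1/2 * (1/2) < \<bar>a*c\<bar> * \<bar>b*d\<bar>" using h by (intro mult_strict_mono) auto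
  also have "\<dots> = - (X*Y)" using pr XY by (simp add: abs_mult[symmetric])
  finally show False using le by simp
qed

lemma disc_ivt:
  fixes f :: "nat \<Rightarrow> real"
  shows "f i \<le> 0 \<Longrightarrow> 0 \<le> f j \<Longrightarrow> i < j \<Longrightarrow> \<exists>k. i \<le> k \<and> k < j \<and> f k * f (Suc k) \<le> 0"
proof (induction j)
  case 0 then show ?case by simp
next
  case (Suc j)
  show ?case
  proof (cases "i = j")
    case True
    then show ?thesis using Suc.prems by (intro exI[of _ i]) (auto intro: mult_nonpos_nonneg)
  next
    case False
    show ?thesis
    proof (cases "0 \<le> f j")
      case True
      then obtain k where "i \<le> k \<and> k < j \<and> f k * f (Suc k) \<le> 0" using Suc False by auto
      then show ?thesis by (intro exI[of _ k]) auto
    next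
      case f: False
      then show ?thesis using Suc.prems False
        by (intro exI[of _ j]) (auto intro: mult_nonpos_nonneg)
    qed
  qed
qed

locale core2 = core +
  assumes Hz: "\<And>a c b d. ((a,c),(b,d)) \<in> E \<Longrightarrow> c \<noteq> 0"
begin

definition good :: "real\<times>real \<Rightarrow> bool" where
  "good y \<longleftrightarrow> isV y \<and> fst y \<noteq> 0 \<and> \<bar>fst y * snd y\<bar> \<le> 1/2"

lemma vert:
  assumes E0: "((0,e),(b,d)) \<in> E"
  shows "\<exists>y. good y \<and> \<bar>snd y\<bar> \<le> 3/s*\<bar>e\<bar>"
proof -
  have "0*d - e*b = 1" using E_det0[OF E0] .
  hence eb: "e*b = -1" by simp
  hence e0: "e \<noteq> 0" and b0: "b \<noteq> 0" by auto
  have lp: "0 < lam" using lam_ge1 by simp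
  define x where "x = -d/(lam*e)"
  define n where "n = floor x"
  define d' where "d' = d + of_int n*lam*e"
  have E1: "((0,e),(b,d')) \<in> E" using shift[OF E0, of n] unfolding d'_def by simp
  define t where "t = d'/e"
  have tx: "t = lam * (of_int n - x)" unfolding t_def d'_def x_def using e0 lp by (simp add: field_simps)
  have "of_int n \<le> x" "x < of_int n + 1" unfolding n_def by linarith+
  hence t_le: "t \<le> 0" unfolding tx using lp
    by (simp_all add: mult_nonneg_nonpos)
  have "lam*(x - of_int n) < lam*1" using lp \<open>x < of_int n + 1\<close> by (intro mult_strict_left_mono) auto
  hence t_gt: "-lam < t" unfolding tx by (simp add: algebra_simps)
  have d't: "d' = t*e" unfolding t_def using e0 by simp
  define V where "V = Vc 0 e b d'"
  define f where "f k = fst (V k) * snd (V k)" for k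
  have fstV: "fst (V k) = Bq k * b" for k unfolding V_def Vc_def by simp
  have sndV: "snd (V k) = e * (Aq k + Bq k * t)" for k unfolding V_def Vc_def d't by (simp add: algebra_simps)
  have fV: "f k = - (Bq k * (Aq k + Bq k * t))" for k
  proof -
    have "f k = Bq k * (e*b) * (Aq k + Bq k * t)" unfolding f_def fstV sndV by (simp add: algebra_simps)
    then show ?thesis using eb by simp
  qed
  have f1: "f 1 \<le> 0" using fV[of 1] Aq1 Bq1 t_gt by simp
  have fq: "0 \<le> f (q-1)" using fV[of "q-1"] Aq_last Bq_last t_le by simp
  have "1 < q - 1" using q3 by simp
  then obtain k where k: "1 \<le> k" "k < q-1" "f k * f (Suc k) \<le> 0" using disc_ivt[OF f1 fq] by auto
  have Ek: "(V k, V (Suc k)) \<in> E" unfolding V_def by (rule chain[OF E1])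
  have dk: "fst (V k) * snd (V (Suc k)) - snd (V k) * fst (V (Suc k)) = 1" using E_det[OF Ek] .
  have "\<bar>f k\<bar> \<le> 1/2 \<or> \<bar>f (Suc k)\<bar> \<le> 1/2"
    using crossing[OF dk] k(3) unfolding f_def by (simp add: algebra_simps)
  moreover have gj: "good (V j) \<and> \<bar>snd (V j)\<bar> \<le> 3/s*\<bar>e\<bar>"
    if j: "1 \<le> j" "j \<le> q-1" "\<bar>f j\<bar> \<le> 1/2" "isV (V j)" for j
  proof
    have "0 < Bq j" using Bq_pos j by simp
    then have "fst (V j) \<noteq> 0" using fstV b0 by simp
    then show "good (V j)" using j unfolding good_def f_def by simp
    have tb: "\<bar>t\<bar> \<le> 2" using t_le t_gt lam_lt2 by simp
    have "\<bar>Aq j + Bq j * t\<bar> \<le> \<bar>Aq j\<bar> + \<bar>Bq j\<bar> * \<bar>t\<bar>" by (simp add: abs_mult[symmetric] abs_triangle_ineq)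
    also have "\<dots> \<le> 1/s + 1/s * 2" using Aq_bd[of j] Bq_bd[of j] tb s_pos by (intro add_mono mult_mono) auto
    also have "\<dots> = 3/s" by simp
    finally have "\<bar>Aq j + Bq j * t\<bar> \<le> 3/s" .
    then have "\<bar>e\<bar> * \<bar>Aq j + Bq j * t\<bar> \<le> \<bar>e\<bar> * (3/s)" by (intro mult_left_mono) auto
    then show "\<bar>snd (V j)\<bar> \<le> 3/s*\<bar>e\<bar>" unfolding sndV abs_mult by (simp add: mult.commute)
  qed
  ultimately show ?thesis using k isV1[OF Ek] isV2[OF Ek]
    by (metis Suc_leI less_imp_le_nat le_SucI)
qed

definition cq :: real where "cq = lam^2/4"
definition kap :: real where "kap = cq/(2*(1-cq))"
definition Kc :: real where "Kc = 6*exp(2*kap)/s"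

lemma cq_pos: "0 < cq" and cq_lt1: "cq < 1"
proof -
  show "0 < cq" using lam_ge1 by (simp add: cq_def)
  have "lam^2 < 2^2" using lam_ge1 lam_lt2 by (intro power_strict_mono) auto
  then show "cq < 1" by (simp add: cq_def)
qed

lemma kap_nn: "0 \<le> kap" using cq_pos cq_lt1 by (simp add: kap_def)

lemma Kc_ge: "6/s \<le> Kc"
proof -
  have "1 \<le> exp (2*kap)" using kap_nn by simp
  then have "6*1/s \<le> 6*exp(2*kap)/s" using s_pos by (intro divide_right_mono mult_left_mono) auto
  then show ?thesis by (simp add: Kc_def)
qed

lemma Kc_pos: "0 < Kc" using s_pos by (simp add: Kc_def)

lemma six_s: "1 \<le> 6/s" using s_pos s_le1 by (simp add: field_simps)

lemma Kc_exp: assumes "1/2 < A" shows "6/s \<le> Kc * exp(-kap/A)"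
proof -
  have "kap*1 \<le> kap*(2*A)" by (rule mult_left_mono) (use assms kap_nn in auto)
  hence "kap/A \<le> 2*kap" using assms by (simp add: field_simps)
  hence "0 \<le> 2*kap - kap/A" by simp
  hence "1 \<le> exp (2*kap - kap/A)" by simp
  hence "6/s * 1 \<le> 6/s * exp (2*kap - kap/A)" using s_pos by (intro mult_left_mono) auto
  also have "\<dots> = Kc * exp(-kap/A)" by (simp add: Kc_def exp_diff exp_minus field_simps)
  finally show ?thesis by simp
qed

lemma potential:
  assumes A: "1/2 < A" and A': "0 < A'" "A' \<le> cq*A" and C: "C' \<le> C*(1/(2*A) + lam/2)" "0 \<le> C" "0 \<le> C'"
  shows "C'*exp(-kap/A') \<le> C*exp(-kap/A)"
proof -
  have Ap: "0 < A" using A by simp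
  have "1/(2*A) + lam/2 \<le> 1 + 1/(2*A)" using lam_lt2 by simp
  also have "\<dots> \<le> exp (1/(2*A))" by (rule exp_ge_add_one_self)
  finally have "C' \<le> C * exp (1/(2*A))" using C by (meson mult_left_mono order_trans)
  moreover have "exp(-kap/A') \<le> exp(-kap/(cq*A))"
  proof -
    have "kap/(cq*A) \<le> kap/A'" using A' Ap cq_pos kap_nn by (intro divide_left_mono) auto
    then show ?thesis by simp
  qed
  ultimately have "C'*exp(-kap/A') \<le> C * exp (1/(2*A)) * exp(-kap/(cq*A))"
    using C by (intro mult_mono) auto
  also have "\<dots> = C * exp (1/(2*A) - kap/(cq*A))" by (simp add: exp_diff exp_minus field_simps)
  also have "1/(2*A) - kap/(cq*A) = -kap/A"
    using cq_pos cq_lt1 Ap by (simp add: kap_def field_simps)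
  finally show ?thesis .
qed

lemma R: "\<forall>a c b d. ((a,c),(b,d)) \<in> E \<longrightarrow> 1/2 < \<bar>a*c\<bar> \<longrightarrow> \<bar>a*c\<bar> \<le> (1/2)*(1/cq)^N \<longrightarrow>
   (\<exists>y. good y \<and> \<bar>snd y\<bar> \<le> Kc*\<bar>c\<bar>*exp(-kap/\<bar>a*c\<bar>))"
proof (induction N)
  case 0 then show ?case by auto
next
  case (Suc N)
  show ?case
  proof (intro allI impI)
    fix a c b d
    assume E0: "((a,c),(b,d)) \<in> E" and h1: "1/2 < \<bar>a*c\<bar>" and h2: "\<bar>a*c\<bar> \<le> (1/2)*(1/cq)^Suc N"
    define A where "A = a*c"
    have Ap: "1/2 < \<bar>A\<bar>" using h1 by (simp add: A_def)
    have A0: "A \<noteq> 0" using Ap by auto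
    have a0: "a \<noteq> 0" and c0: "c \<noteq> 0" using A0 by (auto simp: A_def)
    have lp: "0 < lam" using lam_ge1 by simp
    define Bm where "Bm = a*d + c*b"
    define x where "x = -Bm/(2*A*lam)"
    define n where "n = round x"
    define Bp where "Bp = Bm + 2*A*lam* of_int n"
    have "Bp = 2*A*lam*(of_int n - x)" unfolding Bp_def x_def using A0 lp by (simp add: field_simps)
    hence "\<bar>Bp\<bar> = 2*\<bar>A\<bar>*lam*\<bar>of_int n - x\<bar>" using lp by (simp add: abs_mult)
    also have "\<dots> \<le> 2*\<bar>A\<bar>*lam*(1/2)" unfolding n_def using lp
      by (intro mult_left_mono of_int_round_abs_le) auto
    finally have Bpb: "\<bar>Bp\<bar> \<le> lam*\<bar>A\<bar>" by (simp add: mult.commute)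
    define a' where "a' = b + of_int n*lam*a"
    define c' where "c' = d + of_int n*lam*c"
    have E1: "((a',c'),(-a,-c)) \<in> E" unfolding a'_def c'_def by (rule stepE[OF E0])
    have det: "a*d - c*b = 1" using E_det0[OF E0] .
    have i1: "a*c' - c*a' = 1" using det unfolding a'_def c'_def by (simp add: algebra_simps)
    have i2: "a*c' + c*a' = Bp" unfolding a'_def c'_def Bp_def Bm_def A_def by (simp add: algebra_simps)
    have i3: "4*A*(a'*c') = Bp^2 - 1"
    proof -
      have "(a*c' + c*a')^2 - (a*c' - c*a')^2 = 4*A*(a'*c')" unfolding A_def by (simp add: power2_eq_square algebra_simps)
      then show ?thesis using i1 i2 by simp
    qed
    have i4: "2*a*c' = 1 + Bp" using i1 i2 by simp
    have "\<bar>c'\<bar> * (2*\<bar>A\<bar>) = \<bar>2*a*c'\<bar>*\<bar>c\<bar>" unfolding A_def by (simp add: abs_mult)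
    also have "\<dots> = \<bar>1 + Bp\<bar>*\<bar>c\<bar>" using i4 by simp
    also have "\<dots> \<le> (1 + lam*\<bar>A\<bar>)*\<bar>c\<bar>" using Bpb by (intro mult_right_mono) auto
    finally have cb0: "\<bar>c'\<bar> * (2*\<bar>A\<bar>) \<le> (1 + lam*\<bar>A\<bar>)*\<bar>c\<bar>" .
    have cb: "\<bar>c'\<bar> \<le> \<bar>c\<bar>*(1/(2*\<bar>A\<bar>) + lam/2)"
      using cb0 A0 by (simp add: field_simps)
    have "lam*\<bar>A\<bar> \<le> 2*\<bar>A\<bar>" using lam_lt2 by (intro mult_right_mono) auto
    hence "1/(2*\<bar>A\<bar>) + lam/2 \<le> 2" using Ap by (simp add: field_simps)
    hence "\<bar>c\<bar>*(1/(2*\<bar>A\<bar>) + lam/2) \<le> \<bar>c\<bar>*2" by (rule mult_left_mono) simp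
    hence cb2: "\<bar>c'\<bar> \<le> 2*\<bar>c\<bar>" using cb by simp
    have six: "6/s*\<bar>c\<bar> \<le> Kc*\<bar>c\<bar>*exp(-kap/\<bar>a*c\<bar>)"
    proof -
      have "\<bar>c\<bar>*(6/s) \<le> \<bar>c\<bar>*(Kc*exp(-kap/\<bar>a*c\<bar>))" using Kc_exp[of "\<bar>a*c\<bar>"] h1 by (intro mult_left_mono) auto
      then show ?thesis by (simp add: algebra_simps)
    qed
    show "\<exists>y. good y \<and> \<bar>snd y\<bar> \<le> Kc*\<bar>c\<bar>*exp(-kap/\<bar>a*c\<bar>)"
    proof (cases "a' = 0")
      case True
      have "((0,c'),(-a,-c)) \<in> E" using E1 True by simp
      then obtain y where y: "good y" "\<bar>snd y\<bar> \<le> 3/s*\<bar>c'\<bar>" using vert by blast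
      have "3/s*\<bar>c'\<bar> \<le> 3/s*(2*\<bar>c\<bar>)" using cb2 s_pos by (intro mult_left_mono) auto
      then show ?thesis using y six by (intro exI[of _ y]) auto
    next
      case False
      show ?thesis
      proof (cases "\<bar>a'*c'\<bar> \<le> 1/2")
        case True
        have "good (a',c')" using True False isV1[OF E1] by (simp add: good_def)
        moreover have "\<bar>c'\<bar> \<le> 6/s*\<bar>c\<bar>"
        proof -
          have "2 \<le> 6/s" using s_pos s_le1 by (simp add: field_simps)
          hence "2*\<bar>c\<bar> \<le> 6/s*\<bar>c\<bar>" by (rule mult_right_mono) simp
          then show ?thesis using cb2 by simp
        qed
        ultimately show ?thesis using six by (intro exI[of _ "(a',c')"]) auto
      next
        case big: False
        have "1 < 4*\<bar>A\<bar>*\<bar>a'*c'\<bar>"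
        proof -
          have "1/2*(1/2) < \<bar>A\<bar>*\<bar>a'*c'\<bar>" using Ap big by (intro mult_strict_mono) auto
          then show ?thesis by simp
        qed
        also have "4*\<bar>A\<bar>*\<bar>a'*c'\<bar> = \<bar>Bp^2 - 1\<bar>" unfolding i3[symmetric] by (simp add: abs_mult)
        finally have "1 < \<bar>Bp^2 - 1\<bar>" .
        moreover have "0 \<le> Bp^2" by simp
        ultimately have "\<bar>Bp^2 - 1\<bar> = Bp^2 - 1" by (simp add: abs_if split: if_splits)
        also have "\<dots> \<le> (lam*\<bar>A\<bar>)^2 - 1"
        proof -
          have "\<bar>Bp\<bar> \<le> \<bar>lam*\<bar>A\<bar>\<bar>" using Bpb lp by simp
          then show ?thesis unfolding abs_le_square_iff by simp
        qed
        finally have "4*\<bar>A\<bar>*\<bar>a'*c'\<bar> \<le> (lam*\<bar>A\<bar>)^2 - 1"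
          unfolding i3[symmetric] by (simp add: abs_mult)
        hence "4*\<bar>A\<bar>*\<bar>a'*c'\<bar> \<le> (lam*\<bar>A\<bar>)^2" by simp
        hence "\<bar>A\<bar>*(4*\<bar>a'*c'\<bar>) \<le> \<bar>A\<bar>*(lam^2*\<bar>A\<bar>)" by (simp add: power2_eq_square algebra_simps)
        hence "4*\<bar>a'*c'\<bar> \<le> lam^2*\<bar>A\<bar>" using A0 by (simp add: mult_le_cancel_left_pos)
        hence A'b: "\<bar>a'*c'\<bar> \<le> cq*\<bar>A\<bar>" unfolding cq_def by simp
        have "\<bar>a'*c'\<bar> \<le> (1/2)*(1/cq)^N"
        proof -
          have "cq*\<bar>A\<bar> \<le> cq*((1/2)*(1/cq)^Suc N)" using h2 cq_pos unfolding A_def by (intro mult_left_mono) auto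
          also have "\<dots> = (1/2)*(1/cq)^N" using cq_pos by (simp add: field_simps)
          finally show ?thesis using A'b by simp
        qed
        then obtain y where y: "good y" "\<bar>snd y\<bar> \<le> Kc*\<bar>c'\<bar>*exp(-kap/\<bar>a'*c'\<bar>)"
          using Suc.IH[rule_format, OF E1] big by auto
        have "\<bar>c'\<bar>*exp(-kap/\<bar>a'*c'\<bar>) \<le> \<bar>c\<bar>*exp(-kap/\<bar>A\<bar>)"
          by (rule potential[OF Ap _ A'b cb]) (use big in auto)
        hence "Kc*(\<bar>c'\<bar>*exp(-kap/\<bar>a'*c'\<bar>)) \<le> Kc*(\<bar>c\<bar>*exp(-kap/\<bar>A\<bar>))"
          using Kc_pos by (intro mult_left_mono) auto
        then show ?thesis using y by (intro exI[of _ y]) (auto simp: A_def mult.assoc)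
      qed
    qed
  qed
qed

definition rr :: real where "rr = lam/2"
definition XX :: real where "XX = max \<bar>z0\<bar> (rr*\<bar>z1\<bar>)"

lemma euclid: "\<exists>a c b d. ((a,c),(b,d)) \<in> E \<and> \<bar>c\<bar> \<le> rr^k*XX \<and> rr*\<bar>d\<bar> \<le> rr^k*XX"
proof (induction k)
  case 0 then show ?case using base by (intro exI[of _ x0] exI[of _ z0] exI[of _ x1] exI[of _ z1]) (simp add: XX_def)
next
  case (Suc k)
  then obtain a c b d where E0: "((a,c),(b,d)) \<in> E" and h: "\<bar>c\<bar> \<le> rr^k*XX" by blast
  have c0: "c \<noteq> 0" using Hz[OF E0] .
  have lp: "0 < lam" using lam_ge1 by simp
  define x where "x = -d/(lam*c)"
  define n where "n = round x"
  define c' where "c' = d + of_int n*lam*c"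
  have E1: "((b + of_int n*lam*a, c'),(-a,-c)) \<in> E" unfolding c'_def by (rule stepE[OF E0])
  have "c' = lam*c*(of_int n - x)" unfolding c'_def x_def using c0 lp by (simp add: field_simps)
  hence "\<bar>c'\<bar> = lam*\<bar>c\<bar>*\<bar>of_int n - x\<bar>" using lp by (simp add: abs_mult)
  also have "\<dots> \<le> lam*\<bar>c\<bar>*(1/2)" unfolding n_def using lp by (intro mult_left_mono of_int_round_abs_le) auto
  also have "\<dots> = rr*\<bar>c\<bar>" by (simp add: rr_def)
  finally have cb: "\<bar>c'\<bar> \<le> rr*\<bar>c\<bar>" .
  have rr0: "0 \<le> rr" using lp by (simp add: rr_def)
  have "rr*\<bar>c\<bar> \<le> rr*(rr^k*XX)" using h rr0 by (rule mult_left_mono)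
  hence "rr*\<bar>c\<bar> \<le> rr^Suc k*XX" by (simp add: mult.assoc)
  then show ?case using E1 cb by (intro exI[of _ "b + of_int n*lam*a"] exI[of _ c'] exI[of _ "-a"] exI[of _ "-c"]) auto
qed

lemma key: assumes "0 < eps" shows "\<exists>y. good y \<and> \<bar>snd y\<bar> \<le> eps"
proof -
  have "z0 \<noteq> 0" using Hz[OF base] .
  hence X0: "0 < XX" by (simp add: XX_def)
  have rr1: "rr < 1" using lam_lt2 by (simp add: rr_def)
  have "0 < eps/(Kc*XX)" using assms X0 Kc_pos by simp
  then obtain k where k: "rr^k < eps/(Kc*XX)" using real_arch_pow_inv rr1 by blast
  obtain a c b d where E0: "((a,c),(b,d)) \<in> E" and h: "\<bar>c\<bar> \<le> rr^k*XX" using euclid by blast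
  have "rr^k*XX < eps/Kc" using k X0 Kc_pos by (simp add: field_simps)
  hence "\<bar>c\<bar> < eps/Kc" using h by simp
  hence cK: "Kc*\<bar>c\<bar> \<le> eps" using Kc_pos by (simp add: field_simps)
  have K1: "\<bar>c\<bar> \<le> Kc*\<bar>c\<bar>" and K3: "3/s*\<bar>c\<bar> \<le> Kc*\<bar>c\<bar>"
  proof -
    have "1 \<le> Kc" using Kc_ge six_s by simp
    then show "\<bar>c\<bar> \<le> Kc*\<bar>c\<bar>" using mult_right_mono[of 1 Kc "\<bar>c\<bar>"] by simp
    have "3/s \<le> Kc" using Kc_ge s_pos by (smt (verit) divide_right_mono)
    then show "3/s*\<bar>c\<bar> \<le> Kc*\<bar>c\<bar>" by (rule mult_right_mono) simp
  qed
  show ?thesis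
  proof (cases "a = 0")
    case True
    then obtain y where "good y" "\<bar>snd y\<bar> \<le> 3/s*\<bar>c\<bar>" using vert E0 by blast
    then show ?thesis using K3 cK by (intro exI[of _ y]) auto
  next
    case a0: False
    show ?thesis
    proof (cases "\<bar>a*c\<bar> \<le> 1/2")
      case True
      then have "good (a,c)" using a0 isV1[OF E0] by (simp add: good_def)
      then show ?thesis using K1 cK by (intro exI[of _ "(a,c)"]) auto
    next
      case False
      have "1 < 1/cq" using cq_pos cq_lt1 by simp
      then obtain N where "2*\<bar>a*c\<bar> < (1/cq)^N" using real_arch_pow by blast
      hence "\<bar>a*c\<bar> \<le> (1/2)*(1/cq)^N" by simp
      then obtain y where y: "good y" "\<bar>snd y\<bar> \<le> Kc*\<bar>c\<bar>*exp(-kap/\<bar>a*c\<bar>)"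
        using R[rule_format, OF E0, of N] False by auto
      have "exp(-kap/\<bar>a*c\<bar>) \<le> 1" using kap_nn by simp
      hence "Kc*\<bar>c\<bar>*exp(-kap/\<bar>a*c\<bar>) \<le> Kc*\<bar>c\<bar>*1" using Kc_pos by (intro mult_left_mono) auto
      then show ?thesis using y cK by (intro exI[of _ y]) auto
    qed
  qed
qed

end

lemma Agv: "(A::real^2^2) *v (g *v vec2 x y) = x *\<^sub>R (A *v (g *v vec2 1 0)) + y *\<^sub>R (A *v (g *v vec2 0 1))"
  by (subst gv_vec2) (simp add: matrix_vector_right_distrib matrix_vector_mult_scaleR)

lemma Agv_neg: "(A::real^2^2) *v (g *v vec2 (-1) 0) = - (A *v (g *v vec2 1 0))"
  by (subst Agv) simp

lemma Agv_lam: "(A::real^2^2) *v (g *v vec2 l 1) = l *\<^sub>R (A *v (g *v vec2 1 0)) + A *v (g *v vec2 0 1)"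
  by (subst Agv) simp

lemma gS1: "(g ** S_mat) *v vec2 1 0 = g *v vec2 0 1"
  by (metis matrix_vector_mul_assoc S_e1)
lemma gS2: "(g ** S_mat) *v vec2 0 1 = g *v vec2 (-1) 0"
  by (metis matrix_vector_mul_assoc S_e2)
lemma gT1: "(g ** T_mat m) *v vec2 1 0 = g *v vec2 1 0"
  by (metis matrix_vector_mul_assoc T_e1)
lemma gT2: "(g ** T_mat m) *v vec2 0 1 = g *v vec2 (lambda_hecke m) 1"
  by (metis matrix_vector_mul_assoc T_e2)
lemma gTi1: "(g ** matrix_inv (T_mat m)) *v vec2 1 0 = g *v vec2 1 0"
  by (metis matrix_vector_mul_assoc Ti_e1)
lemma gTi2: "(g ** matrix_inv (T_mat m)) *v vec2 0 1 = g *v vec2 (- lambda_hecke m) 1"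
  by (metis matrix_vector_mul_assoc Ti_e2)

lemma mulv_nth: "((A::real^2^2) *v x) $ 1 = A$1$1 * x$1 + A$1$2 * x$2" "(A *v x) $ 2 = A$2$1 * x$1 + A$2$2 * x$2"
  by (simp_all add: matrix_vector_mult_def sum_2)

theorem mainTheorem17:
  fixes m :: nat and A :: "real^2^2" and \<alpha> :: real
  assumes "m \<ge> 3" and "A \<in> SL2"
  shows "(\<exists>v \<in> transl_set A (Lambda_hecke m). v $ 1 \<noteq> 0 \<and> \<alpha> = v $ 2 / v $ 1)
       \<or> infinite {v \<in> transl_set A (Lambda_hecke m).
                    v $ 1 > 0 \<and> \<bar>\<alpha> - v $ 2 / v $ 1\<bar> \<le> 1 / (2 * (v $ 1)^2)}"
    (is "?D1 \<or> infinite ?S")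
proof (cases ?D1)
  case True then show ?thesis by blast
next
  case nD1: False
  define e1 where "e1 = vec2 1 0"
  define e2 where "e2 = vec2 0 1"
  define U where "U g = A *v (g *v e1)" for g
  define W where "W g = A *v (g *v e2)" for g
  define x0 where "x0 = U (mat 1) $ 1"
  define z0 where "z0 = U (mat 1) $ 2 - \<alpha> * U (mat 1) $ 1"
  define x1 where "x1 = W (mat 1) $ 1"
  define z1 where "z1 = W (mat 1) $ 2 - \<alpha> * W (mat 1) $ 1"
  have dA: "det A = 1" using assms(2) by (simp add: SL2_def)
  have det0: "x0*z1 - z0*x1 = 1"
    using dA unfolding x0_def z0_def x1_def z1_def U_def W_def e1_def e2_def det_2
    by (simp add: mulv_nth algebra_simps)
  interpret C: core m x0 z0 x1 z1 using assms(1) det0 by unfold_locales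
  have lamC: "C.lam = lambda_hecke m" by (simp add: C.lam_def lambda_hecke_def)
  have link: "\<exists>g\<in>hecke_group m. a = U g $ 1 \<and> c = U g $ 2 - \<alpha> * U g $ 1 \<and> b = W g $ 1 \<and> d = W g $ 2 - \<alpha> * W g $ 1"
    if "((a,c),(b,d)) \<in> C.E" for a c b d
    using that
  proof (induction rule: C.E.induct)
    case base
    show ?case by (rule bexI[of _ "mat 1"]) (auto simp: x0_def z0_def x1_def z1_def intro: hecke_group.id)
  next
    case (rotS a c b d)
    then obtain g where g: "g \<in> hecke_group m" "a = U g $ 1" "c = U g $ 2 - \<alpha> * U g $ 1" "b = W g $ 1" "d = W g $ 2 - \<alpha> * W g $ 1" by blast
    have f1: "U (g ** S_mat) = W g" by (simp only: U_def W_def e1_def e2_def gS1)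
    have f2: "W (g ** S_mat) = - U g" by (simp only: U_def W_def e1_def e2_def gS2 Agv_neg)
    show ?case
      apply (rule bexI[of _ "g ** S_mat"])
       apply (unfold f1 f2 g(2-5) )
       apply (simp add: algebra_simps)
      apply (rule hecke_group.mulS[OF g(1)])
      done
  next
    case (addT a c b d)
    then obtain g where g: "g \<in> hecke_group m" "a = U g $ 1" "c = U g $ 2 - \<alpha> * U g $ 1" "b = W g $ 1" "d = W g $ 2 - \<alpha> * W g $ 1" by blast
    have f1: "U (g ** T_mat m) = U g" by (simp only: U_def e1_def gT1)
    have f2: "W (g ** T_mat m) = lambda_hecke m *\<^sub>R U g + W g" by (simp only: U_def W_def e1_def e2_def gT2) (rule Agv_lam)
    show ?case
      apply (rule bexI[of _ "g ** T_mat m"])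
       apply (unfold f1 f2 g(2-5) lamC)
       apply (simp add: algebra_simps)
      apply (rule hecke_group.mulT[OF g(1)])
      done
  next
    case (subT a c b d)
    then obtain g where g: "g \<in> hecke_group m" "a = U g $ 1" "c = U g $ 2 - \<alpha> * U g $ 1" "b = W g $ 1" "d = W g $ 2 - \<alpha> * W g $ 1" by blast
    have f1: "U (g ** matrix_inv (T_mat m)) = U g" by (simp only: U_def e1_def gTi1)
    have f2: "W (g ** matrix_inv (T_mat m)) = (- lambda_hecke m) *\<^sub>R U g + W g" by (simp only: U_def W_def e1_def e2_def gTi2) (rule Agv_lam)
    show ?case
      apply (rule bexI[of _ "g ** matrix_inv (T_mat m)"])
       apply (unfold f1 f2 g(2-5) lamC)
       apply (simp add: algebra_simps)
      apply (rule hecke_group.mulTinv[OF g(1)])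
      done
  qed
  have Uin: "U g \<in> transl_set A (Lambda_hecke m)" if "g \<in> hecke_group m" for g
    using that unfolding transl_set_def Lambda_hecke_def U_def e1_def by blast
  have Hz: "c \<noteq> 0" if E0: "((a,c),(b,d)) \<in> C.E" for a c b d
  proof
    assume c0: "c = 0"
    obtain g where g: "g \<in> hecke_group m" "a = U g $ 1" "c = U g $ 2 - \<alpha> * U g $ 1" using link[OF E0] by blast
    have "a*d - c*b = 1" using C.E_det0[OF E0] .
    hence a0: "a \<noteq> 0" using c0 by auto
    have "U g $ 1 \<noteq> 0 \<and> \<alpha> = U g $ 2 / U g $ 1" using g a0 c0 by (simp add: field_simps)
    then show False using nD1 Uin[OF g(1)] by blast
  qed
  interpret D: core2 m x0 z0 x1 z1 by unfold_locales (rule Hz)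
  show ?thesis
  proof (rule disjI2, rule notI)
    assume fin: "finite ?S"
    define Z where "Z = (\<lambda>v. \<bar>v$2 - \<alpha> * v$1\<bar>) ` ?S"
    define M where "M = Min (insert 1 Z)"
    have finZ: "finite (insert 1 Z)" using fin by (simp add: Z_def)
    have Zpos: "\<forall>z \<in> insert 1 Z. 0 < z"
    proof
      fix z assume "z \<in> insert 1 Z"
      then consider "z = 1" | v where "v \<in> ?S" "z = \<bar>v$2 - \<alpha> * v$1\<bar>" unfolding Z_def by blast
      then show "0 < z"
      proof cases
        case 1 then show ?thesis by simp
      next
        case 2
        have "v$2 - \<alpha> * v$1 \<noteq> 0"
        proof
          assume "v$2 - \<alpha> * v$1 = 0"
          then have "v $ 1 \<noteq> 0 \<and> \<alpha> = v $ 2 / v $ 1" using 2(1) by (simp add: field_simps)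
          then show False using nD1 2(1) by blast
        qed
        then show ?thesis using 2 by simp
      qed
    qed
    have Mpos: "0 < M" unfolding M_def using finZ Zpos by (simp add: Min_gr_iff)
    obtain y where y: "D.good y" "\<bar>snd y\<bar> \<le> M/2" using D.key[of "M/2"] Mpos by auto
    obtain a c where ac: "C.isV (a,c)" "0 < a" "\<bar>a*c\<bar> \<le> 1/2" "\<bar>c\<bar> \<le> M/2"
    proof (cases "0 < fst y")
      case True
      then show ?thesis using y that[of "fst y" "snd y"] by (auto simp: D.good_def)
    next
      case False
      then have "fst y < 0" using y by (auto simp: D.good_def)
      moreover have "C.isV (- fst y, - snd y)" using y C.isV_neg[of "fst y" "snd y"] by (auto simp: D.good_def)
      ultimately show ?thesis using y that[of "- fst y" "- snd y"] by (auto simp: D.good_def)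
    qed
    obtain b d where "((a,c),(b,d)) \<in> C.E" using ac(1) unfolding C.isV_def by auto
    then obtain g where g: "g \<in> hecke_group m" "a = U g $ 1" "c = U g $ 2 - \<alpha> * U g $ 1" using link by blast
    define v where "v = U g"
    have v1: "v $ 1 = a" and v2: "v $ 2 = c + \<alpha> * a" using g by (simp_all add: v_def)
    have "\<bar>\<alpha> - v $ 2 / v $ 1\<bar> \<le> 1 / (2 * (v $ 1)^2)"
    proof -
      have "\<alpha> - v $ 2 / v $ 1 = - (c / a)" unfolding v1 v2 using ac(2) by (simp add: field_simps)
      hence "\<bar>\<alpha> - v $ 2 / v $ 1\<bar> = \<bar>c\<bar> / a" using ac(2) by (simp add: abs_divide)
      also have "\<dots> \<le> 1 / (2 * a^2)"
      proof -
        have "a * \<bar>c\<bar> \<le> 1/2" using ac(2,3) by (simp add: abs_mult)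
        then show ?thesis using ac(2) by (simp add: field_simps power2_eq_square)
      qed
      finally show ?thesis unfolding v1 .
    qed
    hence "v \<in> ?S" using Uin[OF g(1)] ac(2) v1 unfolding v_def by auto
    hence "\<bar>c\<bar> \<in> Z" unfolding Z_def using v1 v2 by (auto intro!: image_eqI[of _ _ v])
    hence "M \<le> \<bar>c\<bar>" unfolding M_def using finZ by simp
    then show False using ac(4) Mpos by simp
  qed
qed

end
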